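(* Every pairwise social choice correspondence that satisfies set non-imposition, homogeneity, and strategyproofness is strongly Condorcet-consistent.
   Context: Let $A$ be a finite set of alternatives; a preference profile $R$ assigns a strict total order $\succ_i$ on $A$ to each voter $i$ of a finite non-empty electorate $N\subseteq\{1,2,\dots\}$; $\mathcal{R}^*(A)$ is the set of all profiles over all electorates. $g_R(x,y)=|\{i: x\succ_i y\}|-|\{i: y\succ_i x\}|$; $x\succ_R y$ iff $g_R(x,y)>0$. A Condorcet winner is $x$ with $x\succ_R y$ for all $y\ne x$. An SCC is $f:\mathcal{R}^*(A)\to 2^A\setminus\{\emptyset\}$; pairwise: $f(R)=f(R')$ whenever $g_R=g_{R'}$; set non-imposing: for every non-empty $X\subseteq A$ some profile has $f(R)=X$; homogeneous: $f(kR)=f(R)$ for $k$ copies $kR$ of $R$; strongly Condorcet-consistent: $f(R)=\{x\}$ iff $x$ is the Condorcet winner in $R$. Fishburn's extension: for $X\ne Y$, $X\succ_i^F Y$ iff $x\succ_i y$ for all $x\in X\setminus Y,y\in Y$ and for all $x\in X,y\in Y\setminus X$; $f$ is strategyproof if no voter $i$ can change only his own preference to move from $R$ to $R'$ with $f(R')\succ_i^F f(R)$. *)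

theory Defs
  imports Main
begin

text \<open>Alternatives: the (finite) universe of type 'a.  A strict total order on the
alternatives is represented as a relation P (pairs (x,y) meaning x is strictly preferred to y).\<close>

definition strict_total_order :: "('a \<times> 'a) set \<Rightarrow> bool" where
  "strict_total_order P \<longleftrightarrow> irrefl P \<and> trans P \<and> (\<forall>x y. x \<noteq> y \<longrightarrow> (x, y) \<in> P \<or> (y, x) \<in> P)"

text \<open>A profile: partial map from voters (positive naturals) to preferences; the electorate
is the domain, which must be finite and non-empty.\<close>

type_synonym 'a profile = "nat \<Rightarrow> ('a \<times> 'a) set option"

definition is_profile :: "'a profile \<Rightarrow> bool" where
  "is_profile R \<longleftrightarrow> finite (dom R) \<and> dom R \<noteq> {} \<and> 0 \<notin> dom R
     \<and> (\<forall>i \<in> dom R. strict_total_order (the (R i)))"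

definition prefers :: "'a profile \<Rightarrow> nat \<Rightarrow> 'a \<Rightarrow> 'a \<Rightarrow> bool" where
  "prefers R i x y \<longleftrightarrow> (x, y) \<in> the (R i)"

definition majority_margin :: "'a profile \<Rightarrow> 'a \<Rightarrow> 'a \<Rightarrow> int" where
  "majority_margin R x y =
     int (card {i \<in> dom R. prefers R i x y}) - int (card {i \<in> dom R. prefers R i y x})"

definition condorcet_winner :: "'a profile \<Rightarrow> 'a \<Rightarrow> bool" where
  "condorcet_winner R x \<longleftrightarrow> (\<forall>y. y \<noteq> x \<longrightarrow> majority_margin R x y > 0)"

definition is_SCC :: "('a profile \<Rightarrow> 'a set) \<Rightarrow> bool" where
  "is_SCC f \<longleftrightarrow> (\<forall>R. is_profile R \<longrightarrow> f R \<noteq> {})"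

definition pairwise_SCC :: "('a profile \<Rightarrow> 'a set) \<Rightarrow> bool" where
  "pairwise_SCC f \<longleftrightarrow> (\<forall>R R'. is_profile R \<longrightarrow> is_profile R' \<longrightarrow>
      majority_margin R = majority_margin R' \<longrightarrow> f R = f R')"

definition set_non_imposing :: "('a profile \<Rightarrow> 'a set) \<Rightarrow> bool" where
  "set_non_imposing f \<longleftrightarrow> (\<forall>X. X \<noteq> {} \<longrightarrow> (\<exists>R. is_profile R \<and> f R = X))"

text \<open>k copies of R (k \<ge> 1): voter k*(i-1)+j+1 (j < k) is a copy of voter i.\<close>

definition copies :: "nat \<Rightarrow> 'a profile \<Rightarrow> 'a profile" where
  "copies k R = (\<lambda>v. if v \<ge> 1 then R ((v - 1) div k + 1) else None)"

definition homogeneous :: "('a profile \<Rightarrow> 'a set) \<Rightarrow> bool" where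
  "homogeneous f \<longleftrightarrow> (\<forall>R k. is_profile R \<longrightarrow> k \<ge> 1 \<longrightarrow> f (copies k R) = f R)"

definition strongly_condorcet_consistent :: "('a profile \<Rightarrow> 'a set) \<Rightarrow> bool" where
  "strongly_condorcet_consistent f \<longleftrightarrow>
     (\<forall>R. is_profile R \<longrightarrow> (\<forall>x. f R = {x} \<longleftrightarrow> condorcet_winner R x))"

definition fishburn :: "('a \<times> 'a) set \<Rightarrow> 'a set \<Rightarrow> 'a set \<Rightarrow> bool" where
  "fishburn P X Y \<longleftrightarrow> X \<noteq> Y
     \<and> (\<forall>x \<in> X - Y. \<forall>y \<in> Y. (x, y) \<in> P)
     \<and> (\<forall>x \<in> X. \<forall>y \<in> Y - X. (x, y) \<in> P)"

definition strategyproof :: "('a profile \<Rightarrow> 'a set) \<Rightarrow> bool" where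
  "strategyproof f \<longleftrightarrow> (\<forall>R R' i. is_profile R \<longrightarrow> is_profile R' \<longrightarrow> i \<in> dom R \<longrightarrow>
      (\<forall>j. j \<noteq> i \<longrightarrow> R' j = R j) \<longrightarrow> i \<in> dom R' \<longrightarrow>
      \<not> fishburn (the (R i)) (f R') (f R))"

end

theory Submission
  imports Defs
begin

definition vv :: "('a \<times> 'a) set \<Rightarrow> 'a \<Rightarrow> 'a \<Rightarrow> int" where
  "vv P x y = (if (x,y) \<in> P then 1 else 0) - (if (y,x) \<in> P then 1 else 0)"

definition msum :: "'a profile \<Rightarrow> 'a \<Rightarrow> 'a \<Rightarrow> int" where
  "msum R x y = (\<Sum>i\<in>dom R. vv (the (R i)) x y)"

lemma card_filter_int: "finite A \<Longrightarrow> int (card {i\<in>A. P i}) = (\<Sum>i\<in>A. if P i then 1 else 0)"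
  by (simp add: sum.inter_filter[symmetric])

lemma margin_msum: "finite (dom R) \<Longrightarrow> majority_margin R = msum R"
  unfolding majority_margin_def msum_def vv_def prefers_def
  by (intro ext) (simp add: card_filter_int sum_subtractf)

lemma msum_skew: "msum R x y = - msum R y x"
  unfolding msum_def vv_def by (simp add: sum_negf[symmetric])

lemma msum_diag: "msum R x x = 0"
  using msum_skew[of R x x] by simp

lemma msum_upd: "finite (dom R) \<Longrightarrow> j \<notin> dom R \<Longrightarrow> msum (R(j \<mapsto> Q)) = (\<lambda>x y. msum R x y + vv Q x y)"
proof (intro ext)
  fix x y assume f: "finite (dom R)" and j: "j \<notin> dom R"
  have "msum (R(j \<mapsto> Q)) x y = (\<Sum>i\<in>insert j (dom R). vv (the ((R(j \<mapsto> Q)) i)) x y)"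
    unfolding msum_def by simp
  also have "\<dots> = vv Q x y + (\<Sum>i\<in>dom R. vv (the ((R(j \<mapsto> Q)) i)) x y)"
    using f j by (simp add: sum.insert)
  also have "(\<Sum>i\<in>dom R. vv (the ((R(j \<mapsto> Q)) i)) x y) = msum R x y"
    unfolding msum_def using j by (intro sum.cong) auto
  finally show "msum (R(j \<mapsto> Q)) x y = msum R x y + vv Q x y" by (metis add.commute)
qed

lemma sto_converse: "strict_total_order P \<Longrightarrow> strict_total_order (converse P)"
  unfolding strict_total_order_def irrefl_def by auto

lemma vv_converse: "vv (converse P) x y = - vv P x y"
  unfolding vv_def by auto

lemma profile_upd: "is_profile R \<Longrightarrow> j \<noteq> 0 \<Longrightarrow> strict_total_order Q \<Longrightarrow> is_profile (R(j \<mapsto> Q))"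
  unfolding is_profile_def by auto

lemma pw_msum: "pairwise_SCC f \<Longrightarrow> is_profile R \<Longrightarrow> is_profile R' \<Longrightarrow> msum R = msum R' \<Longrightarrow> f R = f R'"
  unfolding pairwise_SCC_def using margin_msum is_profile_def by metis

lemma gen_step:
  assumes pw: "pairwise_SCC f" and sp: "strategyproof f"
    and R: "is_profile R" and P: "strict_total_order P" and P': "strict_total_order P'"
  shows "\<exists>R'. is_profile R' \<and> msum R' = (\<lambda>x y. msum R x y + vv P' x y - vv P x y) \<and> \<not> fishburn P (f R') (f R)"
proof -
  define j where "j = Suc (Max (dom R))"
  have fin: "finite (dom R)" using R unfolding is_profile_def by auto
  have jn: "j \<notin> dom R" unfolding j_def using fin Max_ge by fastforce
  have jn2: "Suc j \<notin> dom R" unfolding j_def using fin Max_ge by fastforce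
  define R1 where "R1 = (R(j \<mapsto> P))(Suc j \<mapsto> converse P)"
  define R2 where "R2 = (R(j \<mapsto> P'))(Suc j \<mapsto> converse P)"
  have p1: "is_profile R1" unfolding R1_def
    by (intro profile_upd R P sto_converse) (auto simp: j_def)
  have p2: "is_profile R2" unfolding R2_def
    by (intro profile_upd R P' P sto_converse) (auto simp: j_def)
  have m1: "msum R1 = msum R" unfolding R1_def
    using fin jn jn2 by (auto simp: msum_upd vv_converse)
  have m2: "msum R2 = (\<lambda>x y. msum R x y + vv P' x y - vv P x y)" unfolding R2_def
    using fin jn jn2 by (auto simp: msum_upd vv_converse)
  have "\<not> fishburn (the (R1 j)) (f R2) (f R1)"
    using sp p1 p2 unfolding strategyproof_def
    by (elim allE[of _ R1] allE[of _ R2] allE[of _ j]) (auto simp: R1_def R2_def)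
  moreover have "the (R1 j) = P" unfolding R1_def by simp
  moreover have "f R1 = f R" using pw_msum[OF pw p1 R m1] .
  ultimately show ?thesis using p2 m2 by auto
qed

definition ordk :: "('a \<Rightarrow> nat) \<Rightarrow> ('a \<times> 'a) set" where
  "ordk k = {(u,w). k u < k w}"

lemma sto_ordk: "inj k \<Longrightarrow> strict_total_order (ordk k)"
  unfolding strict_total_order_def ordk_def irrefl_def trans_def inj_def
  by (auto; metis linorder_neqE_nat)

definition kt :: "('a \<Rightarrow> nat) \<Rightarrow> nat \<Rightarrow> ('a \<Rightarrow> nat) \<Rightarrow> 'a \<Rightarrow> nat" where
  "kt h N t u = t u * N + h u"

lemma kt_less:
  assumes "\<forall>u. h u < N"
  shows "kt h N t u < kt h N t w \<longleftrightarrow> t u < t w \<or> (t u = t w \<and> h u < h w)"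
proof -
  have A: "kt h N t u < kt h N t w" if "t u < t w" for u w
  proof -
    have "Suc (t u) * N \<le> t w * N" using that by (intro mult_le_mono1) simp
    moreover have "kt h N t u < Suc (t u) * N" using assms by (simp add: kt_def)
    ultimately show ?thesis by (simp add: kt_def)
  qed
  show ?thesis
  proof
    assume "kt h N t u < kt h N t w"
    then show "t u < t w \<or> (t u = t w \<and> h u < h w)"
    proof (cases "t u = t w")
      case True then show ?thesis using \<open>kt h N t u < kt h N t w\<close> by (simp add: kt_def)
    next
      case False
      then have "t u < t w \<or> t w < t u" by linarith
      then show ?thesis using A[of w u] \<open>kt h N t u < kt h N t w\<close> by auto
    qed
  next
    assume "t u < t w \<or> (t u = t w \<and> h u < h w)"
    then show "kt h N t u < kt h N t w" using A by (auto simp: kt_def)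
  qed
qed

lemma kt_inj: assumes "inj h" "\<forall>u. h u < N" shows "inj (kt h N t)"
proof (rule injI)
  fix u w assume "kt h N t u = kt h N t w"
  then have "\<not> kt h N t u < kt h N t w" "\<not> kt h N t w < kt h N t u" by auto
  then have "h u = h w" using kt_less[OF assms(2)] by (auto simp: linorder_neq_iff)
  then show "u = w" using assms(1) by (auto simp: inj_def)
qed

lemma ex_h: "\<exists>(h::'a::finite \<Rightarrow> nat) N. inj h \<and> (\<forall>u. h u < N)"
proof -
  obtain h :: "'a \<Rightarrow> nat" and n where "h ` UNIV = {i. i < n}" "inj_on h UNIV"
    using finite_imp_inj_to_nat_seg[of "UNIV :: 'a set"] by auto
  then show ?thesis by blast
qed

definition sw :: "'a \<Rightarrow> 'a \<Rightarrow> 'a \<Rightarrow> 'a \<Rightarrow> int" where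
  "sw c d u w = (if u = c \<and> w = d then 2 else if u = d \<and> w = c then -2 else 0)"

definition bl :: "'a set \<Rightarrow> 'a \<Rightarrow> 'a \<Rightarrow> int" where
  "bl X u w = (if u \<in> X \<and> w \<notin> X then 2 else if u \<notin> X \<and> w \<in> X then -2 else 0)"

lemma fish_tier:
  assumes "\<forall>u. h u < N" "Y \<noteq> X" "\<forall>y\<in>Y-X. \<forall>z\<in>X. t y < t z" "\<forall>y\<in>Y. \<forall>z\<in>X-Y. t y < t z"
  shows "fishburn (ordk (kt h N t)) Y X"
  using assms unfolding fishburn_def ordk_def by (auto simp: kt_less[OF assms(1)])

lemma vv_kt:
  assumes "\<forall>u. h u < N"
  shows "vv (ordk (kt h N t)) x y = (if t x < t y \<or> (t x = t y \<and> h x < h y) then 1 else 0)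
           - (if t y < t x \<or> (t y = t x \<and> h y < h x) then 1 else 0)"
  unfolding vv_def ordk_def by (simp add: kt_less[OF assms])

lemma orders_swap:
  fixes X :: "'a::finite set"
  assumes "c \<noteq> d" "d \<notin> X" "c \<notin> X"
  shows "\<exists>P P'. strict_total_order P \<and> strict_total_order P' \<and> (\<forall>x y. vv P' x y - vv P x y = sw c d x y) \<and> (Y \<noteq> X \<longrightarrow> fishburn P Y X)"
proof -
  obtain h :: "'a \<Rightarrow> nat" and N where h: "inj h" "\<forall>u. h u < N" using ex_h by blast
  define b where "b u = (if u \<in> Y - X then 0 else if u \<in> X \<inter> Y then 4 else if u \<in> X then 6 else (8::nat))" for u
  define t where "t u = (if u = d then 1 else if u = c then 2 else b u)" for u
  define t' where "t' u = (if u = d then 2 else if u = c then 1 else b u)" for u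
  have b: "b u \<noteq> 1 \<and> b u \<noteq> 2" for u unfolding b_def by auto
  show ?thesis
  proof (intro exI conjI allI impI)
    show "strict_total_order (ordk (kt h N t))" "strict_total_order (ordk (kt h N t'))"
      using sto_ordk kt_inj h by blast+
    fix x y
    show "vv (ordk (kt h N t')) x y - vv (ordk (kt h N t)) x y = sw c d x y"
      unfolding vv_kt[OF h(2)] sw_def t_def t'_def using assms b[of x] b[of y]
      by (auto simp: b_def)
  next
    assume "Y \<noteq> X"
    then show "fishburn (ordk (kt h N t)) Y X"
      by (intro fish_tier h) (auto simp: t_def b_def assms)
  qed
qed

lemma vv_kt2:
  assumes "\<forall>u. h u < N"
  shows "vv (ordk (kt h N t)) x y = (if t x < t y then 1 else if t y < t x then -1 else if h x < h y then 1 else if h y < h x then -1 else 0)"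
  unfolding vv_kt[OF assms] by auto

lemma orders_single:
  fixes X :: "'a::finite set"
  assumes "c \<noteq> d" "X = {c}"
  shows "\<exists>P P'. strict_total_order P \<and> strict_total_order P' \<and> (\<forall>x y. vv P' x y - vv P x y = sw c d x y) \<and> (Y \<noteq> X \<longrightarrow> fishburn P Y X)"
proof -
  obtain h :: "'a \<Rightarrow> nat" and N where h: "inj h" "\<forall>u. h u < N" using ex_h by blast
  define b where "b u = (if u \<in> Y - X then 0 else if u \<in> X \<inter> Y then 4 else if u \<in> X then 6 else (8::nat))" for u
  define t where "t u = (if u = d then 3 else b u)" for u
  define t' where "t' u = (if u = d then 7 else b u)" for u
  show ?thesis
  proof (intro exI conjI allI impI)
    show "strict_total_order (ordk (kt h N t))" "strict_total_order (ordk (kt h N t'))"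
      using sto_ordk kt_inj h by blast+
    fix x y
    show "vv (ordk (kt h N t')) x y - vv (ordk (kt h N t)) x y = sw c d x y"
      unfolding vv_kt2[OF h(2)] sw_def t_def t'_def b_def using assms
      by (cases "x = d"; cases "y = d"; cases "x = c"; cases "y = c"; cases "x \<in> Y"; cases "y \<in> Y") simp_all
  next
    assume "Y \<noteq> X"
    then show "fishburn (ordk (kt h N t)) Y X"
      by (intro fish_tier h) (auto simp: t_def b_def assms)
  qed
qed

lemma orders_block:
  fixes X :: "'a::finite set"
  shows "\<exists>P P'. strict_total_order P \<and> strict_total_order P' \<and> (\<forall>x y. vv P' x y - vv P x y = bl X x y) \<and> (Y \<noteq> X \<longrightarrow> fishburn P Y X)"
proof -
  obtain h :: "'a \<Rightarrow> nat" and N where h: "inj h" "\<forall>u. h u < N" using ex_h by blast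
  define t where "t u = (if u \<notin> X then 2 else if u \<in> Y then 4 else (6::nat))" for u
  define t' where "t' u = (if u \<notin> X then 7 else if u \<in> Y then 4 else (6::nat))" for u
  show ?thesis
  proof (intro exI conjI allI impI)
    show "strict_total_order (ordk (kt h N t))" "strict_total_order (ordk (kt h N t'))"
      using sto_ordk kt_inj h by blast+
    fix x y
    show "vv (ordk (kt h N t')) x y - vv (ordk (kt h N t)) x y = bl X x y"
      unfolding vv_kt2[OF h(2)] bl_def t_def t'_def
      by (cases "x \<in> X"; cases "y \<in> X"; cases "x \<in> Y"; cases "y \<in> Y") simp_all
  next
    assume "Y \<noteq> X"
    then show "fishburn (ordk (kt h N t)) Y X"
      by (intro fish_tier h) (auto simp: t_def)
  qed
qed

lemma move:
  assumes pw: "pairwise_SCC f" and sp: "strategyproof f" and R: "is_profile R" and X: "f R = X"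
    and ord: "\<And>Y. \<exists>P P'. strict_total_order P \<and> strict_total_order P' \<and> (\<forall>x y. vv P' x y - vv P x y = D x y) \<and> (Y \<noteq> X \<longrightarrow> fishburn P Y X)"
  shows "\<exists>R'. is_profile R' \<and> msum R' = (\<lambda>x y. msum R x y + D x y) \<and> f R' = X"
proof -
  have gs: "\<exists>R'. is_profile R' \<and> msum R' = (\<lambda>x y. msum R x y + D x y) \<and> \<not> fishburn P (f R') X"
    if a1: "strict_total_order P" and a2: "strict_total_order P'" and a3: "\<forall>x y. vv P' x y - vv P x y = D x y" for P P'
  proof -
    obtain R' where "is_profile R'" "msum R' = (\<lambda>x y. msum R x y + vv P' x y - vv P x y)"
      "\<not> fishburn P (f R') (f R)" using gen_step[OF pw sp R a1 a2] by blast
    moreover have "(\<lambda>x y. msum R x y + vv P' x y - vv P x y) = (\<lambda>x y. msum R x y + D x y)"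
    proof (intro ext)
      fix x y show "msum R x y + vv P' x y - vv P x y = msum R x y + D x y"
        using a3 by (metis add_diff_eq)
    qed
    ultimately show ?thesis using X by auto
  qed
  obtain R0 where R0: "is_profile R0" "msum R0 = (\<lambda>x y. msum R x y + D x y)"
    using ord[of X] gs by blast
  obtain P P' where PP: "strict_total_order P" "strict_total_order P'" "\<forall>x y. vv P' x y - vv P x y = D x y"
    "f R0 \<noteq> X \<longrightarrow> fishburn P (f R0) X" using ord[of "f R0"] by blast
  obtain R1 where R1: "is_profile R1" "msum R1 = (\<lambda>x y. msum R x y + D x y)" "\<not> fishburn P (f R1) X"
    using gs[OF PP(1-3)] by blast
  have "f R1 = f R0" using pw_msum[OF pw R1(1) R0(1)] R1(2) R0(2) by simp
  then have "f R0 = X" using R1(3) PP(4) by auto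
  then show ?thesis using R0 by blast
qed

lemma sw_cd: "sw c d c d = 2" by (simp add: sw_def)
lemma sw_dc: "c \<noteq> d \<Longrightarrow> sw c d d c = -2" by (simp add: sw_def)
lemma sw_skew: "c \<noteq> d \<Longrightarrow> sw c d u w = - sw c d w u" unfolding sw_def by (cases "u = c"; cases "w = d"; cases "u = d"; cases "w = c") simp_all
lemma sw_even: "even (sw c d u w)" unfolding sw_def by simp
lemma sw_other: "\<not>(u = c \<and> w = d) \<Longrightarrow> \<not>(u = d \<and> w = c) \<Longrightarrow> sw c d u w = 0"
  unfolding sw_def by (simp only: if_False simp_thms) 

lemma reach1:
  fixes f :: "('a::finite) profile \<Rightarrow> 'a set"
  assumes pw: "pairwise_SCC f" and sp: "strategyproof f"
  shows "is_profile R \<Longrightarrow> f R = {x} \<Longrightarrow> \<forall>u w. D u w = - D w u \<Longrightarrow> \<forall>u w. even (D u w)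
    \<Longrightarrow> \<forall>w. 0 \<le> D x w \<Longrightarrow> \<exists>R'. is_profile R' \<and> msum R' = (\<lambda>u w. msum R u w + D u w) \<and> f R' = {x}"
proof (induction "\<Sum>p\<in>UNIV. nat (D (fst p) (snd p))" arbitrary: R D rule: less_induct)
  case less
  show ?case
  proof (cases "\<forall>u w. D u w \<le> 0")
    case True
    have skew: "D u w = - D w u" for u w using less.prems(3) by blast
    have "D u w = 0" for u w using True skew[of u w] by (metis neg_0_le_iff_le order_antisym)
    then have "(\<lambda>u w. msum R u w + D u w) = msum R" by auto
    then show ?thesis using less.prems(1,2) by auto
  next
    case False
    then obtain c d where cd: "D c d > 0" by (auto simp: not_le)
    have skew: "D u w = - D w u" for u w using less.prems(3) by blast
    have "c \<noteq> d" using skew[of c c] cd by auto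
    have "d \<noteq> x"
    proof
      assume "d = x" then show False using skew[of c x] cd less.prems(5)[rule_format, of c] by simp
    qed
    have "even (D c d)" using less.prems(4) by blast
    then have "D c d \<noteq> 1" by auto
    then have c2: "D c d \<ge> 2" using cd by linarith
    have ord: "\<exists>P P'. strict_total_order P \<and> strict_total_order P' \<and> (\<forall>x y. vv P' x y - vv P x y = sw c d x y) \<and> (Y \<noteq> {x} \<longrightarrow> fishburn P Y {x})" for Y
    proof (cases "c = x")
      case True
      then show ?thesis using orders_single[of c d "{x}" Y] \<open>c \<noteq> d\<close> by auto
    next
      case False
      then show ?thesis using orders_swap[of c d "{x}" Y] \<open>c \<noteq> d\<close> \<open>d \<noteq> x\<close> by auto
    qed
    obtain R1 where R1: "is_profile R1" "msum R1 = (\<lambda>u w. msum R u w + sw c d u w)" "f R1 = {x}"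
      using move[OF pw sp less.prems(1,2) ord] by blast
    define D' where "D' u w = D u w - sw c d u w" for u w
    have le1: "nat (D' u w) \<le> nat (D u w)" for u w
    proof -
      consider "u = c \<and> w = d" | "u = d \<and> w = c" | "\<not>(u = c \<and> w = d) \<and> \<not>(u = d \<and> w = c)" by blast
      then show ?thesis
      proof cases
        case 1 then show ?thesis using c2 by (simp add: D'_def sw_cd)
      next
        case 2 then show ?thesis using c2 skew[of d c] \<open>c \<noteq> d\<close> by (simp add: D'_def sw_dc)
      next
        case 3 then show ?thesis by (simp add: D'_def sw_other)
      qed
    qed
    have lt1: "nat (D' c d) < nat (D c d)" using c2 by (simp add: D'_def sw_cd)
    have lt: "(\<Sum>p\<in>UNIV. nat (D' (fst p) (snd p))) < (\<Sum>p\<in>UNIV. nat (D (fst p) (snd p)))"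
    proof (rule sum_strict_mono_ex1)
      show "\<forall>p\<in>UNIV. nat (D' (fst p) (snd p)) \<le> nat (D (fst p) (snd p))" using le1 by simp
      show "\<exists>p\<in>UNIV. nat (D' (fst p) (snd p)) < nat (D (fst p) (snd p))"
        using lt1 by (intro bexI[of _ "(c,d)"]) simp_all
    qed simp
    have p3: "\<forall>u w. D' u w = - D' w u"
    proof (intro allI)
      fix u w show "D' u w = - D' w u"
        using skew[of u w] sw_skew[OF \<open>c \<noteq> d\<close>, of u w] by (simp add: D'_def)
    qed
    have p4: "\<forall>u w. even (D' u w)"
      using less.prems(4) by (simp add: D'_def sw_even)
    have p5: "0 \<le> D' x w" for w
    proof -
      consider "x = c \<and> w = d" | "\<not>(x = c \<and> w = d) \<and> \<not>(x = d \<and> w = c)" using \<open>d \<noteq> x\<close> by blast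
      then show ?thesis
      proof cases
        case 1 then show ?thesis using c2 by (simp add: D'_def sw_cd)
      next
        case 2 then show ?thesis using less.prems(5) by (simp add: D'_def sw_other)
      qed
    qed
    then have p5: "\<forall>w. 0 \<le> D' x w" by blast
    obtain R' where R': "is_profile R'" "msum R' = (\<lambda>u w. msum R1 u w + D' u w)" "f R' = {x}"
      using less.hyps[OF lt R1(1) R1(3) p3 p4 p5] by blast
    have "msum R' = (\<lambda>u w. msum R u w + D u w)" using R'(2) R1(2) by (simp add: D'_def fun_eq_iff)
    then show ?thesis using R' by blast
  qed
qed

lemma reach_block:
  fixes f :: "('a::finite) profile \<Rightarrow> 'a set"
  assumes pw: "pairwise_SCC f" and sp: "strategyproof f"
  shows "is_profile R \<Longrightarrow> f R = X \<Longrightarrow> \<exists>R'. is_profile R' \<and> msum R' = (\<lambda>u w. msum R u w + int t * bl X u w) \<and> f R' = X"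
proof (induction t)
  case 0
  then show ?case by auto
next
  case (Suc t)
  then obtain R1 where R1: "is_profile R1" "msum R1 = (\<lambda>u w. msum R u w + int t * bl X u w)" "f R1 = X" by blast
  obtain R' where "is_profile R'" "msum R' = (\<lambda>u w. msum R1 u w + bl X u w)" "f R' = X"
    using move[OF pw sp R1(1) R1(3) orders_block] by blast
  then show ?case using R1(2) by (auto simp: algebra_simps)
qed

definition cg :: "nat \<Rightarrow> nat \<times> nat \<Rightarrow> nat" where
  "cg k p = (fst p - 1) * k + snd p + 1"

lemma copies_at: "j < k \<Longrightarrow> copies k R (cg k (i, j)) = R i" if "i \<ge> 1"
proof -
  assume "j < k"
  then have "((i - 1) * k + j) div k + 1 = i" using that by simp
  then show ?thesis unfolding copies_def cg_def by simp
qed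

lemma copies_dom:
  assumes "k \<ge> 1" "0 \<notin> dom R"
  shows "dom (copies k R) = cg k ` (dom R \<times> {..<k})"
proof
  show "dom (copies k R) \<subseteq> cg k ` (dom R \<times> {..<k})"
  proof
    fix v assume v: "v \<in> dom (copies k R)"
    then have v1: "v \<ge> 1" unfolding copies_def by (auto split: if_splits)
    let ?i = "(v - 1) div k + 1" and ?j = "(v - 1) mod k"
    have "?i \<in> dom R" using v v1 unfolding copies_def by auto
    moreover have "?j < k" using assms by simp
    moreover have "cg k (?i, ?j) = v" unfolding cg_def using v1
      by simp
    ultimately show "v \<in> cg k ` (dom R \<times> {..<k})" by force
  qed
next
  show "cg k ` (dom R \<times> {..<k}) \<subseteq> dom (copies k R)"
  proof
    fix v assume "v \<in> cg k ` (dom R \<times> {..<k})"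
    then obtain i j where ij: "i \<in> dom R" "j < k" "v = cg k (i, j)" by auto
    have "i \<ge> 1" using ij(1) assms(2) by (cases i) auto
    then show "v \<in> dom (copies k R)" using copies_at[OF \<open>i \<ge> 1\<close> ij(2), where R=R] ij by auto
  qed
qed

lemma cg_inj:
  assumes "0 \<notin> dom R"
  shows "inj_on (cg k) (dom R \<times> {..<k})"
proof (rule inj_onI)
  fix p q assume p: "p \<in> dom R \<times> {..<k}" and q: "q \<in> dom R \<times> {..<k}" and e: "cg k p = cg k q"
  obtain i j where pij: "p = (i, j)" by force
  obtain i' j' where qij: "q = (i', j')" by force
  have "i \<ge> 1" "i' \<ge> 1" using p q assms pij qij by (cases i; auto; cases i'; auto)+
  have jk: "j < k" "j' < k" using p q pij qij by auto
  have e2: "(i - 1) * k + j = (i' - 1) * k + j'" using e pij qij unfolding cg_def by simp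
  have "((i - 1) * k + j) mod k = ((i' - 1) * k + j') mod k" using e2 by simp
  then have "j = j'" using jk by simp
  have "((i - 1) * k + j) div k = ((i' - 1) * k + j') div k" using e2 by simp
  then have "i - 1 = i' - 1" using jk by simp
  then have "i = i'" using \<open>i \<ge> 1\<close> \<open>i' \<ge> 1\<close> by simp
  then show "p = q" using pij qij \<open>j = j'\<close> by simp
qed

lemma copies_profile:
  assumes R: "is_profile R" and k: "k \<ge> 1"
  shows "is_profile (copies k R)"
proof -
  have z: "0 \<notin> dom R" and fin: "finite (dom R)" and ne: "dom R \<noteq> {}"
    and sto: "\<forall>i\<in>dom R. strict_total_order (the (R i))" using R unfolding is_profile_def by auto
  have d: "dom (copies k R) = cg k ` (dom R \<times> {..<k})" using copies_dom[OF k z] .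
  have "finite (dom (copies k R))" using d fin by simp
  moreover have "dom (copies k R) \<noteq> {}"
  proof -
    obtain i where i: "i \<in> dom R" using ne by blast
    have "cg k (i, 0) \<in> dom (copies k R)" unfolding d using i k by auto
    then show ?thesis by blast
  qed
  moreover have "0 \<notin> dom (copies k R)" unfolding copies_def by auto
  moreover have "\<forall>v\<in>dom (copies k R). strict_total_order (the (copies k R v))"
  proof
    fix v assume "v \<in> dom (copies k R)"
    then obtain i j where ij: "i \<in> dom R" "j < k" "v = cg k (i, j)" using d by auto
    have "i \<ge> 1" using ij(1) z by (cases i) auto
    then show "strict_total_order (the (copies k R v))" using copies_at[OF \<open>i \<ge> 1\<close> ij(2), where R=R] ij sto by auto
  qed
  ultimately show ?thesis unfolding is_profile_def by blast
qed

lemma copies_msum: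
  assumes R: "is_profile R" and k: "k \<ge> 1"
  shows "msum (copies k R) = (\<lambda>x y. int k * msum R x y)"
proof (intro ext)
  fix x y
  have z: "0 \<notin> dom R" and fin: "finite (dom R)" using R unfolding is_profile_def by auto
  have "msum (copies k R) x y = (\<Sum>v\<in>cg k ` (dom R \<times> {..<k}). vv (the (copies k R v)) x y)"
    unfolding msum_def copies_dom[OF k z] ..
  also have "\<dots> = (\<Sum>p\<in>dom R \<times> {..<k}. vv (the (copies k R (cg k p))) x y)"
    by (rule sum.reindex[OF cg_inj[OF z], unfolded comp_def])
  also have "\<dots> = (\<Sum>p\<in>dom R \<times> {..<k}. vv (the (R (fst p))) x y)"
  proof (rule sum.cong[OF refl])
    fix p assume p: "p \<in> dom R \<times> {..<k}"
    obtain i j where pij: "p = (i, j)" by force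
    have "i \<ge> 1" using p pij z by (cases i) auto
    then show "vv (the (copies k R (cg k p))) x y = vv (the (R (fst p))) x y"
      using copies_at[OF \<open>i \<ge> 1\<close>, of j k R] p pij by auto
  qed
  also have "\<dots> = (\<Sum>i\<in>dom R. \<Sum>j<k. vv (the (R i)) x y)"
    using sum.cartesian_product[of "\<lambda>i j. vv (the (R i)) x y" "{..<k}" "dom R"] by (simp add: case_prod_beta)
  also have "\<dots> = int k * msum R x y"
    by (simp add: msum_def sum_distrib_left)
  finally show "msum (copies k R) x y = int k * msum R x y" .
qed

lemma bl_skew: "bl X u w = - bl X w u" unfolding bl_def by auto
lemma bl_even: "even (bl X u w)" unfolding bl_def by auto
lemma bl_io: "u \<in> X \<Longrightarrow> w \<notin> X \<Longrightarrow> bl X u w = 2" unfolding bl_def by auto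
lemma bl_ii: "u \<in> X \<Longrightarrow> w \<in> X \<Longrightarrow> bl X u w = 0" unfolding bl_def by auto

lemma abs_le_sum: "\<bar>(g::'a::finite \<Rightarrow> int) c\<bar> \<le> (\<Sum>c\<in>UNIV. \<bar>g c\<bar>)"
  by (rule member_le_sum) auto

lemma le_sum2: "(g::'a::finite \<Rightarrow> int) c \<le> (\<Sum>c\<in>UNIV. g c)" if "\<forall>c. g c \<ge> 0"
  using that by (intro member_le_sum) auto

lemma msum_profile_margin: "is_profile R \<Longrightarrow> majority_margin R = msum R"
  using margin_msum is_profile_def by blast

lemma goal1:
  fixes f :: "('a::finite) profile \<Rightarrow> 'a set"
  assumes pw: "pairwise_SCC f" and sp: "strategyproof f" and ni: "set_non_imposing f"
    and hom: "homogeneous f" and R: "is_profile R" and cw: "condorcet_winner R x"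
  shows "f R = {x}"
proof -
  obtain R0 where R0: "is_profile R0" "f R0 = {x}" using ni unfolding set_non_imposing_def by blast
  define K :: nat where "K = Suc (nat (\<Sum>c\<in>UNIV. \<bar>msum R0 x c\<bar>))"
  have Kge: "int K \<ge> 1 + \<bar>msum R0 x c\<bar>" for c
    using abs_le_sum[of "msum R0 x" c] unfolding K_def by simp
  have mpos: "msum R x c \<ge> 1" if "c \<noteq> x" for c
    using cw that msum_profile_margin[OF R] unfolding condorcet_winner_def by fastforce
  define A where "A = copies 2 R0"
  define B where "B = copies (2 * K) R"
  have pA: "is_profile A" unfolding A_def using copies_profile[OF R0(1)] by simp
  have fA: "f A = {x}" using hom R0 unfolding homogeneous_def A_def by simp
  have mA: "msum A = (\<lambda>u w. 2 * msum R0 u w)" unfolding A_def using copies_msum[OF R0(1), of 2] by simp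
  have pB: "is_profile B" unfolding B_def using copies_profile[OF R] K_def by simp
  have fB: "f B = f R" using hom R unfolding homogeneous_def B_def K_def by simp
  have mB: "msum B = (\<lambda>u w. int (2 * K) * msum R u w)" unfolding B_def using copies_msum[OF R, of "2*K"] K_def by simp
  define D where "D u w = int (2 * K) * msum R u w - 2 * msum R0 u w" for u w
  have d3: "\<forall>u w. D u w = - D w u"
  proof (intro allI)
    fix u w show "D u w = - D w u" unfolding D_def
      using msum_skew[of R u w] msum_skew[of R0 u w] by simp
  qed
  have d4: "\<forall>u w. even (D u w)" unfolding D_def by simp
  have d5: "0 \<le> D x w" for w
  proof (cases "w = x")
    case True then show ?thesis unfolding D_def by (simp add: msum_diag)
  next
    case False
    have "int K * 1 \<le> int K * msum R x w" using mpos[OF False] by (intro mult_left_mono) auto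
    then show ?thesis unfolding D_def using Kge[of w] by simp
  qed
  obtain R' where R': "is_profile R'" "msum R' = (\<lambda>u w. msum A u w + D u w)" "f R' = {x}"
    using reach1[OF pw sp pA fA d3 d4] d5 by blast
  have "msum R' = msum B" using R'(2) mA mB unfolding D_def by (simp add: fun_eq_iff)
  then have "f R' = f B" using pw_msum[OF pw R'(1) pB] by simp
  then show ?thesis using fB R'(3) by simp
qed

lemma pairlemma:
  fixes f :: "('a::finite) profile \<Rightarrow> 'a set"
  assumes pw: "pairwise_SCC f" and sp: "strategyproof f" and ni: "set_non_imposing f"
    and hom: "homogeneous f" and R1: "is_profile R1" and f1: "f R1 = {x, a}" and xa: "x \<noteq> a"
  shows "msum R1 x a \<ge> 0"
proof (rule ccontr)
  assume "\<not> msum R1 x a \<ge> 0"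
  then have neg: "msum R1 a x \<ge> 1" using msum_skew[of R1 a x] by simp
  obtain R2 where R2: "is_profile R2" "f R2 = {a}" using ni unfolding set_non_imposing_def by blast
  define L :: nat where "L = Suc (nat \<bar>msum R2 a x\<bar>)"
  define t :: nat where "t = nat (\<Sum>c\<in>UNIV. int L * \<bar>msum R1 a c\<bar> + \<bar>msum R2 a c\<bar>)"
  have tge: "int t \<ge> int L * \<bar>msum R1 a c\<bar> + \<bar>msum R2 a c\<bar>" for c
  proof -
    have "int L * \<bar>msum R1 a c\<bar> + \<bar>msum R2 a c\<bar> \<le> (\<Sum>c\<in>UNIV. int L * \<bar>msum R1 a c\<bar> + \<bar>msum R2 a c\<bar>)"
      by (rule le_sum2[of "\<lambda>c. int L * \<bar>msum R1 a c\<bar> + \<bar>msum R2 a c\<bar>"]) simp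
    then show ?thesis unfolding t_def by linarith
  qed
  define A where "A = copies (2 * L) R1"
  define B where "B = copies 2 R2"
  have pA: "is_profile A" unfolding A_def using copies_profile[OF R1] L_def by simp
  have fA: "f A = {x, a}" using hom R1 f1 unfolding homogeneous_def A_def L_def by simp
  have mA: "msum A = (\<lambda>u w. int (2 * L) * msum R1 u w)" unfolding A_def using copies_msum[OF R1, of "2*L"] L_def by simp
  have pB: "is_profile B" unfolding B_def using copies_profile[OF R2(1)] by simp
  have fB: "f B = {a}" using hom R2 unfolding homogeneous_def B_def by simp
  have mB: "msum B = (\<lambda>u w. 2 * msum R2 u w)" unfolding B_def using copies_msum[OF R2(1), of 2] by simp
  obtain RA where RA: "is_profile RA" "msum RA = (\<lambda>u w. msum A u w + int t * bl {x, a} u w)" "f RA = {x, a}"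
    using reach_block[OF pw sp pA fA] by blast
  define D where "D u w = int (2 * L) * msum R1 u w + int t * bl {x, a} u w - 2 * msum R2 u w" for u w
  have d3: "\<forall>u w. D u w = - D w u"
  proof (intro allI)
    fix u w show "D u w = - D w u" unfolding D_def
      using msum_skew[of R1 u w] msum_skew[of R2 u w] bl_skew[of "{x,a}" u w] by simp
  qed
  have d4: "\<forall>u w. even (D u w)" unfolding D_def by (simp add: bl_even)
  have d5: "0 \<le> D a w" for w
  proof -
    consider "w = a" | "w = x" | "w \<notin> {x, a}" by blast
    then show ?thesis
    proof cases
      case 1 then show ?thesis unfolding D_def by (simp add: msum_diag bl_ii)
    next
      case 2
      have "int L * 1 \<le> int L * msum R1 a x" using neg by (intro mult_left_mono) auto
      moreover have "int L \<ge> 1 + \<bar>msum R2 a x\<bar>" unfolding L_def by simp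
      ultimately show ?thesis unfolding D_def using 2 by (simp add: bl_ii)
    next
      case 3
      have "int L * (- \<bar>msum R1 a w\<bar>) \<le> int L * msum R1 a w"
        by (rule mult_left_mono) (simp_all add: abs_if)
      then have "int L * msum R1 a w \<ge> - (int L * \<bar>msum R1 a w\<bar>)" by simp
      then show ?thesis unfolding D_def using 3 tge[of w] by (simp add: bl_io)
    qed
  qed
  obtain R' where R': "is_profile R'" "msum R' = (\<lambda>u w. msum B u w + D u w)" "f R' = {a}"
    using reach1[OF pw sp pB fB d3 d4] d5 by blast
  have "msum R' = msum RA" using R'(2) RA(2) mA mB unfolding D_def by (simp add: fun_eq_iff)
  then have "f R' = f RA" using pw_msum[OF pw R'(1) RA(1)] by simp
  then show False using RA(3) R'(3) xa by auto
qed

lemma goal2: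
  fixes f :: "('a::finite) profile \<Rightarrow> 'a set"
  assumes pw: "pairwise_SCC f" and sp: "strategyproof f" and ni: "set_non_imposing f"
    and hom: "homogeneous f" and R: "is_profile R" and fx: "f R = {x}"
  shows "condorcet_winner R x"
proof (rule ccontr)
  assume "\<not> condorcet_winner R x"
  then obtain a where xa: "a \<noteq> x" and le: "msum R x a \<le> 0"
    unfolding condorcet_winner_def msum_profile_margin[OF R] by force
  obtain R1 where R1: "is_profile R1" "f R1 = {x, a}" using ni unfolding set_non_imposing_def
    by (elim allE[of _ "{x,a}"]) auto
  have xa': "x \<noteq> a" using xa by simp
  have m1: "msum R1 x a \<ge> 0" using pairlemma[OF pw sp ni hom R1(1) R1(2) xa'] .
  define t :: nat where "t = nat (\<Sum>c\<in>UNIV. \<bar>msum R1 x c\<bar> + \<bar>msum R x c\<bar>)"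
  have tge: "int t \<ge> \<bar>msum R1 x c\<bar> + \<bar>msum R x c\<bar>" for c
  proof -
    have "\<bar>msum R1 x c\<bar> + \<bar>msum R x c\<bar> \<le> (\<Sum>c\<in>UNIV. \<bar>msum R1 x c\<bar> + \<bar>msum R x c\<bar>)"
      by (rule le_sum2[of "\<lambda>c. \<bar>msum R1 x c\<bar> + \<bar>msum R x c\<bar>"]) simp
    then show ?thesis unfolding t_def by linarith
  qed
  define A where "A = copies 2 R1"
  define B where "B = copies 2 R"
  have pA: "is_profile A" unfolding A_def using copies_profile[OF R1(1)] by simp
  have fA: "f A = {x, a}" using hom R1 unfolding homogeneous_def A_def by simp
  have mA: "msum A = (\<lambda>u w. 2 * msum R1 u w)" unfolding A_def using copies_msum[OF R1(1), of 2] by simp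
  have pB: "is_profile B" unfolding B_def using copies_profile[OF R] by simp
  have fB: "f B = {x}" using hom R fx unfolding homogeneous_def B_def by simp
  have mB: "msum B = (\<lambda>u w. 2 * msum R u w)" unfolding B_def using copies_msum[OF R, of 2] by simp
  obtain RA where RA: "is_profile RA" "msum RA = (\<lambda>u w. msum A u w + int t * bl {x, a} u w)" "f RA = {x, a}"
    using reach_block[OF pw sp pA fA] by blast
  define D where "D u w = 2 * msum R1 u w + int t * bl {x, a} u w - 2 * msum R u w" for u w
  have d3: "\<forall>u w. D u w = - D w u"
  proof (intro allI)
    fix u w show "D u w = - D w u" unfolding D_def
      using msum_skew[of R1 u w] msum_skew[of R u w] bl_skew[of "{x,a}" u w] by simp
  qed
  have d4: "\<forall>u w. even (D u w)" unfolding D_def by (simp add: bl_even)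
  have d5: "0 \<le> D x w" for w
  proof -
    consider "w = x" | "w = a" | "w \<notin> {x, a}" by blast
    then show ?thesis
    proof cases
      case 1 then show ?thesis unfolding D_def by (simp add: msum_diag bl_ii)
    next
      case 2 then show ?thesis unfolding D_def using m1 le by (simp add: bl_ii)
    next
      case 3 then show ?thesis unfolding D_def using tge[of w] by (simp add: bl_io)
    qed
  qed
  obtain R' where R': "is_profile R'" "msum R' = (\<lambda>u w. msum B u w + D u w)" "f R' = {x}"
    using reach1[OF pw sp pB fB d3 d4] d5 by blast
  have "msum R' = msum RA" using R'(2) RA(2) mA mB unfolding D_def by (simp add: fun_eq_iff)
  then have "f R' = f RA" using pw_msum[OF pw R'(1) RA(1)] by simp
  then have "a \<in> {x}" using RA(3) R'(3) by (metis insertCI)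
  then show False using xa by simp
qed

theorem lemma13:
  fixes f :: "('a::finite) profile \<Rightarrow> 'a set"
  assumes "is_SCC f"
    and "pairwise_SCC f"
    and "set_non_imposing f"
    and "homogeneous f"
    and "strategyproof f"
  shows "strongly_condorcet_consistent f"
  unfolding strongly_condorcet_consistent_def
  using goal1[OF assms(2,5,3,4)] goal2[OF assms(2,5,3,4)] by blast

end
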